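(* Let $n\in\mathbb N$ with $n\ge 15$. Then $$\mathrm{ex}(2n-9;T_n^3)=n^2-10n+24+\max\Big\{\Big\lfloor\frac n2\Big\rfloor,13\Big\}.$$
   Context: All graphs are finite simple graphs. For a graph $L$, $\mathrm{ex}(p;L)$ denotes the maximum number of edges in a graph on $p$ vertices that contains no subgraph isomorphic to $L$. For $n\ge 6$, $T_n^3$ is the tree on vertex set $\{v_0,\ldots,v_{n-1}\}$ with edge set $\{v_0v_1,v_0v_2,\ldots,v_0v_{n-4},\ v_1v_{n-3},\ v_1v_{n-2},\ v_1v_{n-1}\}$. $\lfloor x\rfloor$ is the greatest integer not exceeding $x$. *)

theory Defs
  imports Main
begin

definition simple_graph_on :: "'a set \<Rightarrow> 'a set set \<Rightarrow> bool" where
  "simple_graph_on V E \<longleftrightarrow> finite V \<and>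
     E \<subseteq> {e. \<exists>u v. e = {u, v} \<and> u \<noteq> v \<and> u \<in> V \<and> v \<in> V}"

definition contains_copy :: "'a set \<Rightarrow> 'a set set \<Rightarrow> 'b set \<Rightarrow> 'b set set \<Rightarrow> bool" where
  "contains_copy VG EG VL EL \<longleftrightarrow>
     (\<exists>f. inj_on f VL \<and> f ` VL \<subseteq> VG \<and> (\<forall>e\<in>EL. f ` e \<in> EG))"

definition ex :: "nat \<Rightarrow> 'b set \<Rightarrow> 'b set set \<Rightarrow> nat" where
  "ex p VL EL = Max {card E | E. simple_graph_on {0..<p} E \<and>
                    \<not> contains_copy {0..<p} E VL EL}"

definition T3_vertices :: "nat \<Rightarrow> nat set" where
  "T3_vertices n = {0..<n}"

definition T3_edges :: "nat \<Rightarrow> nat set set" where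
  "T3_edges n = {{0, i} | i. 1 \<le> i \<and> i \<le> n - 4} \<union>
                {{1, n - 3}, {1, n - 2}, {1, n - 1}}"

end

theory Submission
  imports Defs
begin


definition nbr :: "'a set \<Rightarrow> 'a set set \<Rightarrow> 'a \<Rightarrow> 'a set" where
  "nbr V E v = {w \<in> V. {v,w} \<in> E}"

lemma sg_edge:
  assumes "simple_graph_on V E" "{x,y} \<in> E"
  shows "x \<in> V" "y \<in> V" "x \<noteq> y"
  using assms by (auto simp: simple_graph_on_def doubleton_eq_iff)

lemma nbr_sym: "y \<in> nbr V E x \<Longrightarrow> simple_graph_on V E \<Longrightarrow> x \<in> nbr V E y"
  by (auto simp: nbr_def insert_commute dest: sg_edge)

lemma nbr_sub: "nbr V E x \<subseteq> V" by (auto simp: nbr_def)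

lemma nbr_notin: "simple_graph_on V E \<Longrightarrow> x \<notin> nbr V E x"
  using sg_edge(3)[of V E x x] by (auto simp: nbr_def)

lemma nbr_iff: "simple_graph_on V E \<Longrightarrow> y \<in> nbr V E x \<longleftrightarrow> {x,y} \<in> E"
  by (auto simp: nbr_def dest: sg_edge)

lemma dc:
  assumes "finite A" "finite B"
  shows "(\<Sum>a\<in>A. card {b\<in>B. P a b}) = (\<Sum>b\<in>B. card {a\<in>A. P a b})"
proof -
  have "(\<Sum>a\<in>A. card {b\<in>B. P a b}) = (\<Sum>a\<in>A. \<Sum>b\<in>B. if P a b then 1 else 0)"
    using assms by (simp add: sum.If_cases Int_def)
  also have "\<dots> = (\<Sum>b\<in>B. \<Sum>a\<in>A. if P a b then 1 else 0)" by (rule sum.swap)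
  also have "\<dots> = (\<Sum>b\<in>B. card {a\<in>A. P a b})"
    using assms by (simp add: sum.If_cases Int_def)
  finally show ?thesis .
qed

lemma dc_nbr:
  assumes "simple_graph_on V E" "finite A" "finite B" "A \<subseteq> V" "B \<subseteq> V"
  shows "(\<Sum>a\<in>A. card (nbr V E a \<inter> B)) = (\<Sum>b\<in>B. card (nbr V E b \<inter> A))"
proof -
  have 1: "nbr V E a \<inter> B = {b\<in>B. {a,b} \<in> E}" for a using assms(5) by (auto simp: nbr_def)
  have 2: "nbr V E b \<inter> A = {a\<in>A. {a,b} \<in> E}" for b using assms(4) by (auto simp: nbr_def insert_commute)
  show ?thesis unfolding 1 2 by (rule dc[OF assms(2,3)])
qed

lemma handshake:
  assumes sg: "simple_graph_on V E" and fin: "finite V"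
  shows "(\<Sum>v\<in>V. card (nbr V E v)) = 2 * card E"
proof -
  have finE: "finite E"
  proof -
    have "E \<subseteq> Pow V" using sg by (auto simp: simple_graph_on_def)
    thus ?thesis using fin by (meson finite_Pow_iff finite_subset)
  qed
  have c1: "card (nbr V E v) = card {e\<in>E. v \<in> e}" if "v \<in> V" for v
  proof -
    have "bij_betw (\<lambda>w. {v,w}) (nbr V E v) {e\<in>E. v \<in> e}"
    proof (rule bij_betwI')
      show "\<And>x y. x \<in> nbr V E v \<Longrightarrow> y \<in> nbr V E v \<Longrightarrow> ({v, x} = {v, y}) = (x = y)"
        by (auto simp: doubleton_eq_iff)
      show "\<And>x. x \<in> nbr V E v \<Longrightarrow> {v, x} \<in> {e \<in> E. v \<in> e}" by (auto simp: nbr_def)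
      fix e assume "e \<in> {e \<in> E. v \<in> e}"
      then obtain a b where e: "e \<in> E" "e = {a,b}" "a \<in> V" "b \<in> V" "a \<noteq> b" "v \<in> e"
        using sg by (auto simp: simple_graph_on_def)
      show "\<exists>x\<in>nbr V E v. e = {v, x}"
      proof (cases "v = a")
        case True thus ?thesis using e by (auto simp: nbr_def)
      next
        case False hence "v = b" using e by auto
        thus ?thesis using e by (auto simp: nbr_def insert_commute)
      qed
    qed
    thus ?thesis by (rule bij_betw_same_card)
  qed
  have c2: "card {v\<in>V. v \<in> e} = 2" if eE: "e \<in> E" for e
  proof -
    obtain a b where e: "e = {a,b}" "a \<in> V" "b \<in> V" "a \<noteq> b"
      using sg eE by (auto simp: simple_graph_on_def)
    hence "{v\<in>V. v \<in> e} = {a,b}" by auto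
    thus ?thesis using e by simp
  qed
  have "(\<Sum>v\<in>V. card (nbr V E v)) = (\<Sum>v\<in>V. card {e\<in>E. v \<in> e})"
    using c1 by simp
  also have "\<dots> = (\<Sum>e\<in>E. card {v\<in>V. v \<in> e})" by (rule dc[OF fin finE])
  also have "\<dots> = (\<Sum>e\<in>E. 2)" using c2 by simp
  finally show ?thesis by simp
qed


lemma copy_nec:
  assumes sg: "simple_graph_on V E" and fin: "finite V"
    and cc: "contains_copy V E (T3_vertices (k+5)) (T3_edges (k+5))"
  shows "\<exists>x w. {x,w} \<in> E \<and> k+1 \<le> card (nbr V E x) \<and> 4 \<le> card (nbr V E w)
           \<and> k+5 \<le> card (nbr V E x \<union> nbr V E w)"
proof -
  obtain f where inj: "inj_on f {0..<k+5}" and img: "f ` {0..<k+5} \<subseteq> V"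
    and ed: "\<forall>e \<in> T3_edges (k+5). f ` e \<in> E"
    using cc by (auto simp: contains_copy_def T3_vertices_def)
  have e0: "{f 0, f i} \<in> E" if "1 \<le> i" "i \<le> k+1" for i
  proof -
    have "{0,i} \<in> T3_edges (k+5)" using that by (auto simp: T3_edges_def)
    thus ?thesis using ed by auto
  qed
  have e1: "{f 1, f i} \<in> E" if "k+2 \<le> i" "i \<le> k+4" for i
  proof -
    have "i = k+2 \<or> i = k+3 \<or> i = k+4" using that by auto
    hence "{1,i} \<in> T3_edges (k+5)" by (auto simp: T3_edges_def)
    thus ?thesis using ed by auto
  qed
  have fV: "f i \<in> V" if "i < k+5" for i using img that by auto
  have s1: "f ` {1..k+1} \<subseteq> nbr V E (f 0)"
    using e0 fV by (auto simp: nbr_def)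
  have s2: "f ` ({0} \<union> {k+2..k+4}) \<subseteq> nbr V E (f 1)"
  proof -
    have "{f 1, f 0} \<in> E" using e0[of 1] by (simp add: insert_commute)
    thus ?thesis using e1 fV by (auto simp: nbr_def)
  qed
  have s3: "f ` {0..<k+5} \<subseteq> nbr V E (f 0) \<union> nbr V E (f 1)"
  proof
    fix y assume "y \<in> f ` {0..<k+5}"
    then obtain i where i: "i < k+5" "y = f i" by auto
    show "y \<in> nbr V E (f 0) \<union> nbr V E (f 1)"
    proof (cases "i = 0")
      case True thus ?thesis using s2 i by auto
    next
      case False
      show ?thesis
      proof (cases "i \<le> k+1")
        case True thus ?thesis using s1 i False by auto
      next
        case False
        hence "i \<in> {k+2..k+4}" using i by auto
        thus ?thesis using s2 i by blast
      qed
    qed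
  qed
  have finN: "finite (nbr V E v)" for v using fin nbr_sub finite_subset by metis
  have c1: "card (f ` {1..k+1}) = k+1"
    by (subst card_image) (auto intro: inj_on_subset[OF inj])
  have c2: "card (f ` ({0} \<union> {k+2..k+4})) = 4"
  proof (subst card_image)
    show "inj_on f ({0} \<union> {k + 2..k + 4})" by (rule inj_on_subset[OF inj]) auto
    have "{0} \<union> {k+2..k+4} = {0, k+2, k+3, k+4}" by auto
    thus "card ({0} \<union> {k + 2..k + 4}) = 4" by simp
  qed
  have c3: "card (f ` {0..<k+5}) = k+5" using inj by (simp add: card_image)
  have "{f 0, f 1} \<in> E" using e0[of 1] by simp
  moreover have "k+1 \<le> card (nbr V E (f 0))" using card_mono[OF finN s1] c1 by simp
  moreover have "4 \<le> card (nbr V E (f 1))" using card_mono[OF finN s2] c2 by simp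
  moreover have "k+5 \<le> card (nbr V E (f 0) \<union> nbr V E (f 1))"
    using card_mono[OF _ s3] c3 finN by simp
  ultimately show ?thesis by blast
qed


lemma copy_suf:
  assumes sg: "simple_graph_on V E" and fin: "finite V" and e: "{x,w} \<in> E"
    and dx: "k+1 \<le> card (nbr V E x)" and dw: "4 \<le> card (nbr V E w)"
    and un: "k+5 \<le> card (nbr V E x \<union> nbr V E w)"
  shows "contains_copy V E (T3_vertices (k+5)) (T3_edges (k+5))"
proof -
  define Nx where "Nx = nbr V E x"
  define Nw where "Nw = nbr V E w"
  define Q where "Q = Nx - {w}"
  define P where "P = Nw - {x}"
  have xw: "x \<noteq> w" "x \<in> V" "w \<in> V" using sg_edge[OF sg e] by auto
  have wNx: "w \<in> Nx" using e nbr_iff[OF sg] Nx_def by auto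
  have xNw: "x \<in> Nw" using e nbr_iff[OF sg] Nw_def by (auto simp: insert_commute)
  have xNx: "x \<notin> Nx" and wNw: "w \<notin> Nw" using nbr_notin[OF sg] Nx_def Nw_def by auto
  have finN: "finite Nx" "finite Nw" using fin nbr_sub finite_subset Nx_def Nw_def by metis+
  have finPQ: "finite P" "finite Q" using finN P_def Q_def by auto
  have cQ: "k \<le> card Q" using dx wNx finN Q_def Nx_def by auto
  have cP: "3 \<le> card P" using dw xNw finN P_def Nw_def by auto
  have PQ: "P \<union> Q = (Nx \<union> Nw) - {x,w}" using xNx wNw P_def Q_def by auto
  have cPQ: "k+3 \<le> card (P \<union> Q)"
  proof -
    have "card ((Nx \<union> Nw) - {x,w}) = card (Nx \<union> Nw) - card {x,w}"
      by (rule card_Diff_subset) (use wNx xNw in auto)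
    thus ?thesis using PQ un xw Nx_def Nw_def by simp
  qed
  obtain S where S: "S \<subseteq> P" "card S = 3" "k \<le> card (Q - S)"
  proof (cases "3 \<le> card (P - Q)")
    case True
    then obtain S where S: "S \<subseteq> P - Q" "card S = 3" by (meson obtain_subset_with_card_n)
    hence "Q - S = Q" by auto
    thus ?thesis using that[of S] S cQ by auto
  next
    case False
    define j where "j = card (P - Q)"
    have j3: "j < 3" using False j_def by simp
    have "card P = card (P \<inter> Q) + j"
    proof -
      have "P = (P \<inter> Q) \<union> (P - Q)" by auto
      hence "card P = card ((P \<inter> Q) \<union> (P - Q))" by simp
      also have "\<dots> = card (P \<inter> Q) + card (P - Q)" by (rule card_Un_disjoint) (use finPQ in auto)
      finally show ?thesis using j_def by simp
    qed
    hence "3 - j \<le> card (P \<inter> Q)" using cP by simp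
    then obtain S' where S': "S' \<subseteq> P \<inter> Q" "card S' = 3 - j" by (meson obtain_subset_with_card_n)
    define S where "S = (P - Q) \<union> S'"
    have finS': "finite S'" using S' finPQ finite_subset by blast
    have "card S = card (P - Q) + card S'" unfolding S_def
      by (rule card_Un_disjoint) (use finPQ finS' S' in auto)
    hence "card S = j + (3 - j)" using S' j_def by simp
    hence cS: "card S = 3" using j3 by simp
    have QS: "Q - S = Q - S'" using S_def by auto
    have "card (Q - S') = card Q - card S'" by (rule card_Diff_subset) (use finS' S' in auto)
    moreover have "card (P \<union> Q) = card Q + j"
    proof -
      have "P \<union> Q = Q \<union> (P - Q)" by auto
      hence "card (P \<union> Q) = card (Q \<union> (P - Q))" by simp
      also have "\<dots> = card Q + card (P - Q)" by (rule card_Un_disjoint) (use finPQ in auto)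
      finally show ?thesis using j_def by simp
    qed
    ultimately have "k \<le> card (Q - S)" using QS cPQ S' j3 by simp
    moreover have "S \<subseteq> P" using S_def S' by auto
    ultimately show ?thesis using that cS by blast
  qed
  obtain Q0 where Q0: "Q0 \<subseteq> Q - S" "card Q0 = k" using obtain_subset_with_card_n S(3) by blast
  have finQ0: "finite Q0" using Q0 finPQ finite_subset by blast
  have finS: "finite S" using S finPQ finite_subset by blast
  obtain g where g: "bij_betw g {0..<(k::nat)} Q0" using ex_bij_betw_nat_finite[OF finQ0] Q0 by auto
  obtain h where h: "bij_betw h {0..<(3::nat)} S" using ex_bij_betw_nat_finite[OF finS] S by auto
  define f where "f i = (if i = 0 then x else if i = 1 then w else if i < k+2 then g (i-2) else h (i-(k+2)))" for i
  have fQ0: "f i \<in> Q0" if "2 \<le> i" "i < k+2" for i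
    using that g f_def by (auto simp: bij_betw_def)
  have fS: "f i \<in> S" if "k+2 \<le> i" "i < k+5" for i
    using that h f_def by (auto simp: bij_betw_def)
  have ginj: "i = j" if "i < k" "j < k" "g i = g j" for i j
    using that g by (auto simp: bij_betw_def inj_on_def)
  have hinj: "i = j" if "i < 3" "j < 3" "h i = h j" for i j
    using that h by (auto simp: bij_betw_def inj_on_def)
  have Q0sub: "Q0 \<subseteq> Nx" "x \<notin> Q0" "w \<notin> Q0" using Q0 Q_def xNx by auto
  have Ssub: "S \<subseteq> Nw" "x \<notin> S" "w \<notin> S" using S P_def wNw by auto
  have Q0S: "Q0 \<inter> S = {}" using Q0 by auto
  have fx: "f i = x \<longleftrightarrow> i = 0" if "i < k+5" for i
  proof -
    have "i = 1 \<Longrightarrow> f i \<noteq> x" using xw f_def by auto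
    moreover have "2 \<le> i \<Longrightarrow> i < k+2 \<Longrightarrow> f i \<noteq> x" using fQ0 Q0sub by metis
    moreover have "k+2 \<le> i \<Longrightarrow> i < k+5 \<Longrightarrow> f i \<noteq> x" using fS Ssub by metis
    ultimately show ?thesis using that f_def by (cases "i = 0"; cases "i = 1"; cases "i < k+2"; auto)
  qed
  have fw: "f i = w \<longleftrightarrow> i = 1" if "i < k+5" for i
  proof -
    have "i = 0 \<Longrightarrow> f i \<noteq> w" using xw f_def by auto
    moreover have "2 \<le> i \<Longrightarrow> i < k+2 \<Longrightarrow> f i \<noteq> w" using fQ0 Q0sub by metis
    moreover have "k+2 \<le> i \<Longrightarrow> i < k+5 \<Longrightarrow> f i \<noteq> w" using fS Ssub by metis
    ultimately show ?thesis using that f_def by (cases "i = 0"; cases "i = 1"; cases "i < k+2"; auto)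
  qed
  have inj: "inj_on f {0..<k+5}"
  proof (rule inj_onI)
    fix i j assume i: "i \<in> {0..<k+5}" and j: "j \<in> {0..<k+5}" and fij: "f i = f j"
    show "i = j"
    proof (cases "i \<le> 1 \<or> j \<le> 1")
      case True
      thus ?thesis using fx fw i j fij by (metis atLeastLessThan_iff le_Suc_eq le_zero_eq One_nat_def)
    next
      case False
      hence i2: "2 \<le> i" and j2: "2 \<le> j" by auto
      show ?thesis
      proof (cases "i < k+2")
        case True note iT = this
        show ?thesis
        proof (cases "j < k+2")
          case True
          hence "g (i-2) = g (j-2)" using fij iT i2 j2 f_def by auto
          hence "i - 2 = j - 2" using ginj iT True i2 j2 by (meson less_diff_conv2)
          thus ?thesis using i2 j2 by simp
        next
          case False
          hence "f j \<in> S" using fS j by auto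
          moreover have "f i \<in> Q0" using fQ0 iT i2 by auto
          ultimately show ?thesis using fij Q0S by auto
        qed
      next
        case False note iF = this
        show ?thesis
        proof (cases "j < k+2")
          case True
          hence "f j \<in> Q0" using fQ0 j2 by auto
          moreover have "f i \<in> S" using fS i iF by auto
          ultimately show ?thesis using fij Q0S by auto
        next
          case False
          hence "h (i-(k+2)) = h (j-(k+2))" using fij iF i2 j2 f_def by auto
          moreover have "i-(k+2) < 3" "j-(k+2) < 3" using i j by auto
          ultimately have "i-(k+2) = j-(k+2)" using hinj by blast
          thus ?thesis using False iF by simp
        qed
      qed
    qed
  qed
  have img: "f ` {0..<k+5} \<subseteq> V"
  proof
    fix y assume "y \<in> f ` {0..<k+5}"
    then obtain i where i: "i < k+5" "y = f i" by auto
    have "Nx \<subseteq> V" "Nw \<subseteq> V" unfolding Nx_def Nw_def by (rule nbr_sub)+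
    thus "y \<in> V"
      using i xw fQ0[of i] fS[of i] Q0sub Ssub f_def
      by (cases "i = 0"; cases "i = 1"; cases "i < k+2"; auto)
  qed
  have edg: "f ` e \<in> E" if eT: "e \<in> T3_edges (k+5)" for e
  proof -
    have NxE: "z \<in> Nx \<Longrightarrow> {x,z} \<in> E" for z using nbr_iff[OF sg] Nx_def by auto
    have NwE: "z \<in> Nw \<Longrightarrow> {w,z} \<in> E" for z using nbr_iff[OF sg] Nw_def by auto
    consider (a) i where "e = {0,i}" "1 \<le> i" "i \<le> k+1" | (b) i where "e = {1,i}" "k+2 \<le> i" "i < k+5"
      using eT unfolding T3_edges_def by force
    thus ?thesis
    proof cases
      case a
      have f0: "f 0 = x" using f_def by simp
      show ?thesis
      proof (cases "i = 1")
        case True thus ?thesis using a e f_def by (simp add: insert_commute)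
      next
        case False
        hence "f i \<in> Q0" using fQ0 a by auto
        thus ?thesis using a f0 NxE Q0sub by auto
      qed
    next
      case b
      have f1: "f 1 = w" using f_def by simp
      have "f i \<in> S" using fS b by auto
      thus ?thesis using b f1 NwE Ssub by auto
    qed
  qed
  show ?thesis unfolding contains_copy_def T3_vertices_def using inj img edg by blast
qed


lemma sum_split_bound:
  fixes g :: "'a \<Rightarrow> nat"
  assumes "finite R" "Y \<subseteq> R" "\<And>y. y \<in> R \<Longrightarrow> g y \<le> c" "\<And>y. y \<in> Y \<Longrightarrow> g y \<le> b"
  shows "sum g R + c * card Y \<le> b * card Y + c * card R"
proof -
  have finY: "finite Y" using assms finite_subset by blast
  have "sum g R = sum g (R - Y) + sum g Y" using sum.subset_diff[OF assms(2,1)] .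
  moreover have "sum g Y \<le> b * card Y" using sum_bounded_above[of Y g b] assms(4) by (simp add: mult.commute)
  moreover have "sum g (R - Y) \<le> c * card (R - Y)" using sum_bounded_above[of "R - Y" g c] assms(3) by (simp add: mult.commute)
  moreover have "card R = card (R - Y) + card Y" using card_Diff_subset[OF finY assms(2)] card_mono[OF assms(1,2)] by simp
  ultimately show ?thesis by (simp add: algebra_simps)
qed

locale tf =
  fixes V :: "'a set" and E :: "'a set set" and k :: nat
  assumes sg: "simple_graph_on V E" and finV: "finite V" and cardV: "card V = 2*k+1" and k10: "10 \<le> k"
  and cond: "\<And>x w. {x,w} \<in> E \<Longrightarrow> k+1 \<le> card (nbr V E x) \<Longrightarrow> 4 \<le> card (nbr V E w)
             \<Longrightarrow> card (nbr V E x \<union> nbr V E w) \<le> k+4"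
begin

abbreviation "N \<equiv> nbr V E"

lemma finN: "finite (N v)" using finV nbr_sub finite_subset by metis

lemma adj: "y \<in> N x \<longleftrightarrow> {x,y} \<in> E" using nbr_iff[OF sg] .

lemma symN: "y \<in> N x \<Longrightarrow> x \<in> N y" using nbr_sym[OF _ sg] .

lemma irrN: "x \<notin> N x" using nbr_notin[OF sg] .

lemma NV: "N x \<subseteq> V" by (rule nbr_sub)

lemma U1:
  assumes "{x,w} \<in> E" "k+1 \<le> card (N x)" "4 \<le> card (N w)"
  shows "card (N w - N x) + card (N x) \<le> k+4"
proof -
  have "N x \<union> N w = N x \<union> (N w - N x)" by auto
  hence "card (N x \<union> N w) = card (N x) + card (N w - N x)"
    using card_Un_disjoint[of "N x" "N w - N x"] finN by auto
  thus ?thesis using cond[OF assms] by simp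
qed

lemma card_part:
  assumes "N v \<subseteq> A \<union> B" "A \<inter> B = {}"
  shows "card (N v) = card (N v \<inter> A) + card (N v \<inter> B)"
proof -
  have "N v = (N v \<inter> A) \<union> (N v \<inter> B)" using assms by auto
  hence "card (N v) = card ((N v \<inter> A) \<union> (N v \<inter> B))" by simp
  also have "\<dots> = card (N v \<inter> A) + card (N v \<inter> B)"
    by (rule card_Un_disjoint) (use finN assms in auto)
  finally show ?thesis .
qed

lemma sum_le_k:
  assumes "\<forall>v\<in>V. card (N v) \<le> k"
  shows "(\<Sum>v\<in>V. card (N v)) \<le> 2*k*k+k"
proof -
  have "(\<Sum>v\<in>V. card (N v)) \<le> card V * k" using sum_bounded_above[of V _ k] assms by auto
  thus ?thesis using cardV by (simp add: algebra_simps)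
qed

lemma star:
  assumes uV: "u \<in> V" and umax: "\<forall>v\<in>V. card (N v) \<le> card (N u)" and big: "k+4 \<le> card (N u)"
  shows "(\<Sum>v\<in>V. card (N v)) \<le> 2*k*k+k"
proof -
  have small: "card (N w) \<le> 3" if wN: "w \<in> N u" for w
  proof (rule ccontr)
    assume "\<not> card (N w) \<le> 3"
    hence "4 \<le> card (N w)" by simp
    moreover have "{u,w} \<in> E" using adj wN by auto
    ultimately have "card (N w - N u) + card (N u) \<le> k+4" using U1 big by auto
    moreover have "u \<in> N w - N u" using symN[OF wN] irrN by auto
    hence "card (N w - N u) \<ge> 1" using finN by (metis One_nat_def Suc_leI card_gt_0_iff empty_iff finite_Diff)
    ultimately show False using big by simp
  qed
  define M where "M = V - N u"
  have NuV: "N u \<subseteq> V" by (rule NV)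
  have finM: "finite M" using M_def finV by auto
  have cM: "card M + card (N u) = 2*k+1"
    using card_Diff_subset[OF finN NuV] card_mono[OF finV NuV] cardV M_def by simp
  have duu: "card (N u) \<le> 2*k"
  proof -
    have "N u \<subseteq> V - {u}" using NuV irrN by auto
    hence "card (N u) \<le> card (V - {u})" using card_mono finV by blast
    thus ?thesis using cardV uV by simp
  qed
  have split: "(\<Sum>v\<in>V. card (N v)) = (\<Sum>v\<in>M. card (N v)) + (\<Sum>v\<in>N u. card (N v))"
    using sum.subset_diff[OF NuV finV] M_def by simp
  have s1: "(\<Sum>v\<in>N u. card (N v)) \<le> 3 * card (N u)"
    using sum_bounded_above[of "N u" "\<lambda>v. card (N v)" 3] small by (simp add: mult.commute)
  have each: "card (N v) + 1 \<le> card (N v \<inter> N u) + card M" if vM: "v \<in> M" for v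
  proof -
    have "card (N v) = card (N v \<inter> N u) + card (N v \<inter> M)"
      by (rule card_part) (use NV M_def in auto)
    moreover have "N v \<inter> M \<subseteq> M - {v}" using irrN by auto
    hence "card (N v \<inter> M) \<le> card M - 1" using card_mono[of "M - {v}"] finM vM by fastforce
    moreover have "card M \<ge> 1" using vM finM by (metis One_nat_def Suc_leI card_gt_0_iff empty_iff)
    ultimately show ?thesis by linarith
  qed
  have "(\<Sum>v\<in>M. card (N v) + 1) \<le> (\<Sum>v\<in>M. card (N v \<inter> N u) + card M)"
    using each by (rule sum_mono)
  moreover have "(\<Sum>v\<in>M. card (N v) + 1) = (\<Sum>v\<in>M. card (N v)) + (\<Sum>v\<in>M. 1)"
    by (rule sum.distrib)
  moreover have "(\<Sum>v\<in>M. card (N v \<inter> N u) + card M) = (\<Sum>v\<in>M. card (N v \<inter> N u)) + card M * card M"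
    by (simp add: sum.distrib)
  ultimately have s2: "(\<Sum>v\<in>M. card (N v)) + card M \<le> (\<Sum>v\<in>M. card (N v \<inter> N u)) + card M * card M"
    by simp
  have "(\<Sum>v\<in>M. card (N v \<inter> N u)) = (\<Sum>w\<in>N u. card (N w \<inter> M))"
    by (rule dc_nbr[OF sg finM finN]) (use M_def NuV in auto)
  also have "\<dots> \<le> (\<Sum>w\<in>N u. card (N w))" by (rule sum_mono) (simp add: card_mono finN)
  finally have s3: "(\<Sum>v\<in>M. card (N v \<inter> N u)) \<le> 3 * card (N u)" using s1 by linarith
  have m3: "card M + 3 \<le> k" using cM big by simp
  have a1: "card M * card M \<le> card M * k" using m3 by simp
  have a2: "(card M + 3) * k \<le> k * k" using m3 by simp
  have a3: "10 * k \<le> k * k" using k10 by simp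
  have "(\<Sum>v\<in>V. card (N v)) + card M \<le> 6 * card (N u) + card M * card M"
    using split s1 s2 s3 by linarith
  moreover have a2': "card M * k + 3*k \<le> k*k" using a2 by (simp add: algebra_simps)
  ultimately have "(\<Sum>v\<in>V. card (N v)) \<le> 2*(k*k)+k" using a1 a3 duu by linarith
  thus ?thesis by (simp add: algebra_simps)
qed

end


locale tfu = tf +
  fixes u
  assumes uV: "u \<in> V" and umax: "\<forall>v\<in>V. card (N v) \<le> card (N u)"
begin

abbreviation "A \<equiv> N u"
abbreviation "R \<equiv> V - N u - {u}"

lemma AV: "A \<subseteq> V" by (rule NV)
lemma finA: "finite A" by (rule finN)
lemma finR: "finite R" using finV by auto
lemma uA: "u \<notin> A" by (rule irrN)

lemma cardAR: "card R + card A = 2*k"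
proof -
  have e: "V = insert u (A \<union> R)" using AV uV by auto
  have "card V = card (insert u (A \<union> R))" by (rule arg_cong[OF e])
  also have "\<dots> = Suc (card (A \<union> R))" by (rule card_insert_disjoint) (use finA finR uA in auto)
  finally have "card V = Suc (card (A \<union> R))" .
  moreover have "card (A \<union> R) = card A + card R" by (rule card_Un_disjoint) (use finA finR in auto)
  ultimately show ?thesis using cardV by simp
qed

lemma uNw: "w \<in> A \<Longrightarrow> u \<in> N w" by (rule symN)

lemma NyR: "y \<in> R \<Longrightarrow> N y \<subseteq> A \<union> R"
  using NV symN by blast

lemma dR: "y \<in> R \<Longrightarrow> card (N y) = card (N y \<inter> R) + card (N y \<inter> A)"
  using card_part[of y R A] NyR by auto

lemma dA:
  assumes "w \<in> A" shows "card (N w) = 1 + card (N w \<inter> A) + card (N w \<inter> R)"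
proof -
  have e: "N w = insert u ((N w \<inter> A) \<union> (N w \<inter> R))" using NV uNw[OF assms] by auto
  have "card (N w) = card (insert u ((N w \<inter> A) \<union> (N w \<inter> R)))" by (rule arg_cong[OF e])
  also have "\<dots> = Suc (card ((N w \<inter> A) \<union> (N w \<inter> R)))" by (rule card_insert_disjoint) (use finN uA in auto)
  finally have "card (N w) = Suc (card ((N w \<inter> A) \<union> (N w \<inter> R)))" .
  moreover have "card ((N w \<inter> A) \<union> (N w \<inter> R)) = card (N w \<inter> A) + card (N w \<inter> R)"
    by (rule card_Un_disjoint) (use finN in auto)
  ultimately show ?thesis by simp
qed

lemma decomp:
  "(\<Sum>v\<in>V. card (N v)) = card A + (\<Sum>w\<in>A. card (N w) + card (N w \<inter> R)) + (\<Sum>y\<in>R. card (N y \<inter> R))"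
proof -
  have e: "V = insert u (A \<union> R)" using AV uV by auto
  have "(\<Sum>v\<in>V. card (N v)) = (\<Sum>v\<in>insert u (A \<union> R). card (N v))" by (rule arg_cong[OF e])
  also have "\<dots> = card A + (\<Sum>v\<in>A \<union> R. card (N v))"
    by (rule sum.insert) (use finA finR uA in auto)
  finally have "(\<Sum>v\<in>V. card (N v)) = card A + (\<Sum>v\<in>A \<union> R. card (N v))" .
  also have "(\<Sum>v\<in>A \<union> R. card (N v)) = (\<Sum>v\<in>A. card (N v)) + (\<Sum>v\<in>R. card (N v))"
    by (rule sum.union_disjoint) (use finA finR in auto)
  also have "(\<Sum>v\<in>R. card (N v)) = (\<Sum>y\<in>R. card (N y \<inter> R)) + (\<Sum>y\<in>R. card (N y \<inter> A))"
    using dR by (simp add: sum.distrib)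
  also have "(\<Sum>y\<in>R. card (N y \<inter> A)) = (\<Sum>w\<in>A. card (N w \<inter> R))"
    by (rule dc_nbr[OF sg finR finA]) (use AV in auto)
  finally have "(\<Sum>v\<in>V. card (N v)) = card A + ((\<Sum>v\<in>A. card (N v)) + ((\<Sum>y\<in>R. card (N y \<inter> R)) + (\<Sum>w\<in>A. card (N w \<inter> R))))" .
  moreover have "(\<Sum>w\<in>A. card (N w) + card (N w \<inter> R)) = (\<Sum>w\<in>A. card (N w)) + (\<Sum>w\<in>A. card (N w \<inter> R))"
    by (rule sum.distrib)
  ultimately show ?thesis by linarith
qed

lemma rb: "y \<in> R \<Longrightarrow> card (N y \<inter> R) + 1 \<le> card R"
proof -
  assume y: "y \<in> R"
  have "N y \<inter> R \<subseteq> R - {y}" using irrN by auto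
  hence "card (N y \<inter> R) \<le> card (R - {y})" by (rule card_mono[rotated]) (use finR in auto)
  moreover have "R \<noteq> {}" using y by auto
  hence "card R \<ge> 1" using finR by (simp add: Suc_le_eq card_gt_0_iff)
  moreover have "card (R - {y}) = card R - 1" using y finR by simp
  ultimately show ?thesis by linarith
qed

lemma sumR: "(\<Sum>y\<in>R. card (N y \<inter> R)) + card R \<le> card R * card R"
proof -
  have "(\<Sum>y\<in>R. card (N y \<inter> R) + 1) \<le> (\<Sum>y\<in>R. card R)"
    by (rule sum_mono) (rule rb)
  also have "\<dots> = card R * card R" by simp
  finally have "(\<Sum>y\<in>R. card (N y \<inter> R) + 1) \<le> card R * card R" .
  moreover have "(\<Sum>y\<in>R. card (N y \<inter> R) + 1) = (\<Sum>y\<in>R. card (N y \<inter> R)) + (\<Sum>y\<in>R. 1)"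
    by (rule sum.distrib)
  ultimately show ?thesis by simp
qed

lemma tb:
  assumes "w \<in> A" "k+1 \<le> card A" "4 \<le> card (N w)"
  shows "card (N w \<inter> R) + card A \<le> k+3"
proof -
  have "{u,w} \<in> E" using adj assms(1) by auto
  hence "card (N w - N u) + card A \<le> k+4" using U1 assms by auto
  moreover have "insert u (N w \<inter> R) \<subseteq> N w - N u" using uNw[OF assms(1)] uA by auto
  hence "card (insert u (N w \<inter> R)) \<le> card (N w - N u)" by (rule card_mono[rotated]) (use finN in auto)
  moreover have "card (insert u (N w \<inter> R)) = Suc (card (N w \<inter> R))"
    by (rule card_insert_disjoint) (use finN in auto)
  ultimately show ?thesis by linarith
qed

lemma tsmall:
  assumes "w \<in> A" "card (N w) \<le> 3"
  shows "card (N w \<inter> R) \<le> 2"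
proof -
  have "insert u (N w \<inter> R) \<subseteq> N w" using uNw[OF assms(1)] by auto
  hence "card (insert u (N w \<inter> R)) \<le> card (N w)" by (rule card_mono[rotated]) (use finN in auto)
  moreover have "card (insert u (N w \<inter> R)) = Suc (card (N w \<inter> R))"
    by (rule card_insert_disjoint) (use finN in auto)
  ultimately show ?thesis using assms by linarith
qed

lemma Ylem:
  assumes x: "x \<notin> R" "{x,y} \<in> E" "k+1 \<le> card (N x)" "card (N x \<inter> R) \<le> 2" and y: "y \<in> R"
  shows "card (N y \<inter> R) \<le> 3"
proof (cases "card (N y) \<le> 3")
  case True
  thus ?thesis using card_mono[OF finN, of "N y \<inter> R" y] by auto
next
  case False
  hence "card (N y - N x) + card (N x) \<le> k+4" using U1 x by auto
  hence c1: "card (N y - N x) \<le> 3" using x by simp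
  have xin: "x \<in> N y - N x" using adj x irrN symN by blast
  have c2: "card (N y - N x - {x}) \<le> 2" using c1 xin finN by simp
  have yin: "y \<in> N x \<inter> R" using adj x y by auto
  have c3: "card (N x \<inter> R - {y}) \<le> 1" using x(4) yin finN by simp
  have "N y \<inter> R \<subseteq> (N y - N x - {x}) \<union> (N x \<inter> R - {y})" using x(1) irrN by auto
  hence "card (N y \<inter> R) \<le> card ((N y - N x - {x}) \<union> (N x \<inter> R - {y}))"
    by (rule card_mono[rotated]) (use finN in auto)
  also have "\<dots> \<le> card (N y - N x - {x}) + card (N x \<inter> R - {y})" by (rule card_Un_le)
  finally show ?thesis using c2 c3 by simp
qed

end


context tfu begin

lemma dle: "w \<in> V \<Longrightarrow> card (N w) \<le> card A" using umax by auto

lemma wV: "w \<in> A \<Longrightarrow> w \<in> V" using AV by auto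

lemma case2:
  assumes cA: "card A = k+3"
  shows "(\<Sum>v\<in>V. card (N v)) \<le> 2*k*k+24"
proof -
  have bA: "card (N w) + card (N w \<inter> R) \<le> k+3" if w: "w \<in> A" for w
  proof (cases "4 \<le> card (N w)")
    case True
    hence "card (N w \<inter> R) + card A \<le> k+3" using tb w cA by auto
    moreover have "card (N w) \<le> card A" using dle wV w by auto
    ultimately show ?thesis using cA by simp
  next
    case False
    thus ?thesis using tsmall[OF w] k10 by simp
  qed
  have sA: "(\<Sum>w\<in>A. card (N w) + card (N w \<inter> R)) \<le> (k+3)*(k+3)"
  proof -
    have "(\<Sum>w\<in>A. card (N w) + card (N w \<inter> R)) \<le> (\<Sum>w\<in>A. k+3)" by (rule sum_mono) (rule bA)
    thus ?thesis using cA by simp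
  qed
  define r where "r = card R"
  have rk: "k = r + 3" using cardAR cA r_def by simp
  have sR: "(\<Sum>y\<in>R. card (N y \<inter> R)) + r \<le> r * r" using sumR r_def by simp
  have e1: "(k+3)*(k+3) = k*k + 6*k + 9" by (simp add: algebra_simps)
  have e2: "r*r + 6*k = k*k + 9" using rk by (simp add: algebra_simps)
  have "(\<Sum>v\<in>V. card (N v)) \<le> 2*(k*k)+24" using decomp sA sR e1 e2 cA rk by linarith
  thus ?thesis by (simp add: algebra_simps)
qed

lemma case1:
  assumes cA: "card A = k+2"
  shows "(\<Sum>v\<in>V. card (N v)) \<le> 2*k*k+20"
proof -
  define r where "r = card R"
  have rk: "k = r + 2" using cardAR cA r_def by simp
  have sR: "(\<Sum>y\<in>R. card (N y \<inter> R)) + r \<le> r * r" using sumR r_def by simp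
  have e2: "r*r + 4*k = k*k + 4" using rk by (simp add: algebra_simps)
  have tw: "card (N w \<inter> R) \<le> 1" if w: "w \<in> A" "4 \<le> card (N w)" for w
    using tb w cA by fastforce
  show ?thesis
  proof (cases "\<exists>w\<in>A. card (N w) = k+2 \<and> 1 \<le> card (N w \<inter> R)")
    case True
    then obtain w0 where w0: "w0 \<in> A" "card (N w0) = k+2" "1 \<le> card (N w0 \<inter> R)" by blast
    then obtain y0 where y0: "y0 \<in> N w0 \<inter> R" by (metis card.empty ex_in_conv not_one_le_zero)
    have ry0: "card (N y0 \<inter> R) \<le> 3"
    proof (rule Ylem)
      show "w0 \<notin> R" using w0 by auto
      show "{w0,y0} \<in> E" using y0 adj by auto
      show "k+1 \<le> card (N w0)" using w0 by simp
      show "card (N w0 \<inter> R) \<le> 2" using tw[of w0] w0 k10 by simp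
      show "y0 \<in> R" using y0 by auto
    qed
    have bA: "card (N w) + card (N w \<inter> R) \<le> k+3" if w: "w \<in> A" for w
    proof (cases "4 \<le> card (N w)")
      case True
      thus ?thesis using tw[OF w True] dle[OF wV[OF w]] cA by simp
    next
      case False
      thus ?thesis using tsmall[OF w] k10 by simp
    qed
    have sA: "(\<Sum>w\<in>A. card (N w) + card (N w \<inter> R)) \<le> (k+2)*(k+3)"
    proof -
      have "(\<Sum>w\<in>A. card (N w) + card (N w \<inter> R)) \<le> (\<Sum>w\<in>A. k+3)" by (rule sum_mono) (rule bA)
      thus ?thesis using cA by simp
    qed
    have "(\<Sum>y\<in>R. card (N y \<inter> R) + 1) + r * card {y0} \<le> 4 * card {y0} + r * card R"
      by (rule sum_split_bound) (use finR y0 ry0 rb r_def in auto)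
    moreover have "(\<Sum>y\<in>R. card (N y \<inter> R) + 1) = (\<Sum>y\<in>R. card (N y \<inter> R)) + (\<Sum>y\<in>R. 1)"
      by (rule sum.distrib)
    ultimately have sR2: "(\<Sum>y\<in>R. card (N y \<inter> R)) + 2*r \<le> 4 + r * r" using r_def by simp
    have e1: "(k+2)*(k+3) = k*k + 5*k + 6" by (simp add: algebra_simps)
    have "(\<Sum>v\<in>V. card (N v)) \<le> 2*(k*k)+20" using decomp sA sR2 e1 e2 cA rk by linarith
    thus ?thesis by (simp add: algebra_simps)
  next
    case False
    have bA: "card (N w) + card (N w \<inter> R) \<le> k+2" if w: "w \<in> A" for w
    proof (cases "4 \<le> card (N w)")
      case True
      show ?thesis
      proof (cases "1 \<le> card (N w \<inter> R)")
        case True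
        hence "card (N w) \<noteq> k+2" using False w by blast
        thus ?thesis using tw[OF w] \<open>4 \<le> card (N w)\<close> dle[OF wV[OF w]] cA by simp
      next
        case False
        thus ?thesis using dle[OF wV[OF w]] cA by simp
      qed
    next
      case False
      thus ?thesis using tsmall[OF w] k10 by simp
    qed
    have sA: "(\<Sum>w\<in>A. card (N w) + card (N w \<inter> R)) \<le> (k+2)*(k+2)"
    proof -
      have "(\<Sum>w\<in>A. card (N w) + card (N w \<inter> R)) \<le> (\<Sum>w\<in>A. k+2)" by (rule sum_mono) (rule bA)
      thus ?thesis using cA by simp
    qed
    have e1: "(k+2)*(k+2) = k*k + 4*k + 4" by (simp add: algebra_simps)
    have "(\<Sum>v\<in>V. card (N v)) \<le> 2*(k*k)+20" using decomp sA sR e1 e2 cA rk by linarith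
    thus ?thesis by (simp add: algebra_simps)
  qed
qed

end


context tfu begin

lemma case0:
  assumes cA: "card A = k+1"
  shows "(\<Sum>v\<in>V. card (N v)) \<le> 2*k*k+k+3 \<or> (\<Sum>v\<in>V. card (N v)) \<le> 2*k*k+16"
proof -
  define r where "r = card R"
  have rk: "k = r + 1" using cardAR cA r_def by simp
  have sR: "(\<Sum>y\<in>R. card (N y \<inter> R)) + r \<le> r * r" using sumR r_def by simp
  have e2: "r*r + 2*k = k*k + 1" using rk by (simp add: algebra_simps)
  have t2: "card (N w \<inter> R) \<le> 2" if w: "w \<in> A" for w
  proof (cases "4 \<le> card (N w)")
    case True thus ?thesis using tb[OF w] cA by fastforce
  next
    case False thus ?thesis using tsmall[OF w] by simp
  qed
  have dA1: "card (N w) \<le> k+1" if w: "w \<in> A" for w using dle[OF wV[OF w]] cA by simp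
  define Yw where "Yw = {y \<in> R. \<exists>w\<in>A. card (N w) = k+1 \<and> {w,y} \<in> E}"
  have Yb: "card (N y \<inter> R) \<le> 3" if y: "y \<in> Yw" for y
  proof -
    obtain w where w: "w \<in> A" "card (N w) = k+1" "{w,y} \<in> E" using y Yw_def by auto
    show ?thesis
    proof (rule Ylem)
      show "w \<notin> R" using w by auto
      show "{w,y} \<in> E" using w by simp
      show "k+1 \<le> card (N w)" using w by simp
      show "card (N w \<inter> R) \<le> 2" using t2 w by simp
      show "y \<in> R" using y Yw_def by simp
    qed
  qed
  have YwR: "Yw \<subseteq> R" using Yw_def by auto
  have sRp: "(\<Sum>y\<in>R. card (N y \<inter> R) + 1) = (\<Sum>y\<in>R. card (N y \<inter> R)) + r"
    unfolding r_def by (rule trans[OF sum.distrib]) simp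
  consider (two) y1 y2 where "y1 \<in> Yw" "y2 \<in> Yw" "y1 \<noteq> y2" | (one) y0 where "Yw = {y0}" | (zero) "Yw = {}"
    by blast
  then show ?thesis
  proof cases
    case two
    have bA: "card (N w) + card (N w \<inter> R) \<le> k+3" if w: "w \<in> A" for w
      using dA1[OF w] t2[OF w] by simp
    have sA: "(\<Sum>w\<in>A. card (N w) + card (N w \<inter> R)) \<le> (k+1)*(k+3)"
    proof -
      have "(\<Sum>w\<in>A. card (N w) + card (N w \<inter> R)) \<le> (\<Sum>w\<in>A. k+3)" by (rule sum_mono) (rule bA)
      thus ?thesis using cA by simp
    qed
    have "(\<Sum>y\<in>R. card (N y \<inter> R) + 1) + r * card {y1,y2} \<le> 4 * card {y1,y2} + r * card R"
      by (rule sum_split_bound) (use finR two YwR Yb rb r_def in auto)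
    hence sR2: "(\<Sum>y\<in>R. card (N y \<inter> R)) + 3*r \<le> 8 + r * r" using sRp two r_def by simp
    have e1: "(k+1)*(k+3) = k*k + 4*k + 3" by (simp add: algebra_simps)
    have "(\<Sum>v\<in>V. card (N v)) \<le> 2*(k*k)+16" using decomp sA sR2 e1 e2 cA rk by linarith
    thus ?thesis by (simp add: algebra_simps)
  next
    case one
    have bA: "card (N w) + card (N w \<inter> R) \<le> k+2" if w: "w \<in> A" for w
    proof (cases "card (N w) = k+1")
      case True
      have "N w \<inter> R \<subseteq> {y0}"
      proof
        fix y assume "y \<in> N w \<inter> R"
        hence "y \<in> Yw" using Yw_def w True adj by auto
        thus "y \<in> {y0}" using one by simp
      qed
      hence "card (N w \<inter> R) \<le> 1" using card_mono[of "{y0}"] by fastforce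
      thus ?thesis using True by simp
    next
      case False thus ?thesis using dA1[OF w] t2[OF w] by simp
    qed
    have sA: "(\<Sum>w\<in>A. card (N w) + card (N w \<inter> R)) \<le> (k+1)*(k+2)"
    proof -
      have "(\<Sum>w\<in>A. card (N w) + card (N w \<inter> R)) \<le> (\<Sum>w\<in>A. k+2)" by (rule sum_mono) (rule bA)
      thus ?thesis using cA by simp
    qed
    have "(\<Sum>y\<in>R. card (N y \<inter> R) + 1) + r * card {y0} \<le> 4 * card {y0} + r * card R"
      by (rule sum_split_bound) (use finR one YwR Yb rb r_def in auto)
    hence sR2: "(\<Sum>y\<in>R. card (N y \<inter> R)) + 2*r \<le> 4 + r * r" using sRp r_def by simp
    have e1: "(k+1)*(k+2) = k*k + 3*k + 2" by (simp add: algebra_simps)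
    have "(\<Sum>v\<in>V. card (N v)) \<le> 2*(k*k)+16" using decomp sA sR2 e1 e2 cA rk by linarith
    thus ?thesis by (simp add: algebra_simps)
  next
    case zero
    have big0: "N w \<inter> R = {}" if w: "w \<in> A" "card (N w) = k+1" for w
    proof (rule ccontr)
      assume "N w \<inter> R \<noteq> {}"
      then obtain y where "y \<in> N w \<inter> R" by blast
      hence "y \<in> Yw" using Yw_def w adj by auto
      thus False using zero by simp
    qed
    have bA: "card (N w) + card (N w \<inter> R) \<le> k+2" if w: "w \<in> A" for w
    proof (cases "card (N w) = k+1")
      case True thus ?thesis using big0[OF w True] by simp
    next
      case False thus ?thesis using dA1[OF w] t2[OF w] by simp
    qed
    define Bad where "Bad = {w \<in> A. card (N w) + card (N w \<inter> R) \<le> k+1}"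
    have BadA: "Bad \<subseteq> A" using Bad_def by auto
    have e1: "(k+1)*(k+2) = k*k + 3*k + 2" by (simp add: algebra_simps)
    consider (c1) y1 y2 where "y1 \<in> R" "y2 \<in> R" "y1 \<noteq> y2" "{y1,y2} \<notin> E"
      | (c2) "2 \<le> card Bad"
      | (c3) "\<forall>y1\<in>R. \<forall>y2\<in>R. y1 \<noteq> y2 \<longrightarrow> {y1,y2} \<in> E" "card Bad \<le> 1"
      by force
    then show ?thesis
    proof cases
      case c1
      have r2: "2 \<le> r"
      proof -
        have "{y1,y2} \<subseteq> R" using c1 by auto
        hence "card {y1,y2} \<le> r" using card_mono finR r_def by metis
        thus ?thesis using c1 by simp
      qed
      have ry: "card (N y \<inter> R) + 1 \<le> r - 1" if y: "y \<in> {y1,y2}" for y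
      proof -
        have "N y \<inter> R \<subseteq> R - {y1,y2}" using y c1 irrN adj by (auto simp: insert_commute)
        hence "card (N y \<inter> R) \<le> card (R - {y1,y2})" by (rule card_mono[rotated]) (use finR in auto)
        moreover have "card (R - {y1,y2}) = r - 2"
          using card_Diff_subset[of "{y1,y2}" R] c1 finR r_def by simp
        ultimately show ?thesis using r2 by simp
      qed
      have "(\<Sum>y\<in>R. card (N y \<inter> R) + 1) + r * card {y1,y2} \<le> (r-1) * card {y1,y2} + r * card R"
        by (rule sum_split_bound) (use finR c1 ry rb r_def in auto)
      hence "(\<Sum>y\<in>R. card (N y \<inter> R)) + r + 2*r \<le> 2*(r-1) + r * r" using sRp c1 r_def by simp
      hence sR2: "(\<Sum>y\<in>R. card (N y \<inter> R)) + r + 2 \<le> r * r" using r2 by simp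
      have sA: "(\<Sum>w\<in>A. card (N w) + card (N w \<inter> R)) \<le> (k+1)*(k+2)"
      proof -
        have "(\<Sum>w\<in>A. card (N w) + card (N w \<inter> R)) \<le> (\<Sum>w\<in>A. k+2)" by (rule sum_mono) (rule bA)
        thus ?thesis using cA by simp
      qed
      have "(\<Sum>v\<in>V. card (N v)) \<le> 2*(k*k)+k+3" using decomp sA sR2 e1 e2 cA rk by linarith
      thus ?thesis by (simp add: algebra_simps)
    next
      case c2
      have "(\<Sum>w\<in>A. card (N w) + card (N w \<inter> R)) + (k+2) * card Bad \<le> (k+1) * card Bad + (k+2) * card A"
        by (rule sum_split_bound) (use finA BadA bA Bad_def in auto)
      hence sA: "(\<Sum>w\<in>A. card (N w) + card (N w \<inter> R)) + 2 \<le> (k+1)*(k+2)"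
        using c2 cA by (simp add: algebra_simps)
      have "(\<Sum>v\<in>V. card (N v)) \<le> 2*(k*k)+k+3" using decomp sA sR e1 e2 cA rk by linarith
      thus ?thesis by (simp add: algebra_simps)
    next
      case c3
      define Good where "Good = A - Bad"
      have cG: "k \<le> card Good"
        using card_Diff_subset[OF finite_subset[OF BadA finA] BadA] card_mono[OF finA BadA] c3 cA Good_def
        by simp
      have gd: "card (N w) = k \<and> card (N w \<inter> R) = 2" if w: "w \<in> Good" for w
      proof -
        have wA: "w \<in> A" and nb: "\<not> card (N w) + card (N w \<inter> R) \<le> k+1" using w Good_def Bad_def by auto
        have "card (N w) \<noteq> k+1" using big0[OF wA] nb by auto
        thus ?thesis using dA1[OF wA] t2[OF wA] nb bA[OF wA] by simp
      qed
      have "(\<Sum>w\<in>Good. card (N w \<inter> R)) = (\<Sum>w\<in>Good. 2)" using gd by simp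
      hence "2 * card Good \<le> (\<Sum>w\<in>A. card (N w \<inter> R))"
        using sum_mono2[OF finA, of Good "\<lambda>w. card (N w \<inter> R)"] Good_def by auto
      moreover have "(\<Sum>w\<in>A. card (N w \<inter> R)) = (\<Sum>y\<in>R. card (N y \<inter> A))"
        by (rule dc_nbr[OF sg finA finR]) (use AV in auto)
      ultimately have sS: "2*k \<le> (\<Sum>y\<in>R. card (N y \<inter> A))" using cG by linarith
      obtain y where yR: "y \<in> R" and sy: "3 \<le> card (N y \<inter> A)"
      proof (rule ccontr)
        assume "\<not> thesis"
        hence "\<forall>y\<in>R. card (N y \<inter> A) \<le> 2" using that by force
        hence "(\<Sum>y\<in>R. card (N y \<inter> A)) \<le> (\<Sum>y\<in>R. 2)" by (intro sum_mono) auto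
        thus False using sS r_def rk by simp
      qed
      have NyR: "N y \<inter> R = R - {y}" using c3 yR irrN adj by auto
      have ry: "card (N y \<inter> R) = k - 2" using NyR yR finR r_def rk by simp
      have dy: "card (N y) = card (N y \<inter> R) + card (N y \<inter> A)" using dR[OF yR] .
      have dyle: "card (N y) \<le> k+1" using dle yR cA by auto
      have sy3: "card (N y \<inter> A) = 3" using sy ry dy dyle k10 by simp
      have dyk: "k+1 \<le> card (N y)" using sy3 ry dy k10 by simp
      have "card ((N y \<inter> A) - Bad) \<ge> 2"
      proof -
        have "card (N y \<inter> A) \<le> card ((N y \<inter> A) - Bad) + card Bad"
          by (metis card_Un_le Un_Diff_cancel2 card_mono finite_subset[OF BadA finA] finite_UnI finN finite_Int le_trans sup_ge1 Int_Un_eq(1) sup_commute)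
        thus ?thesis using sy3 c3 by simp
      qed
      then obtain w where w1: "w \<in> N y \<inter> A" "w \<notin> Bad" by (metis card.empty diff_is_0_eq' Diff_iff ex_in_conv le_zero_eq nat_le_linear not_numeral_le_zero)
      have wG: "w \<in> Good" using w1 Good_def by auto
      have wA: "w \<in> A" using w1 by auto
      have dw: "card (N w) = k" and tw: "card (N w \<inter> R) = 2" using gd[OF wG] by auto
      have aw: "card (N w \<inter> A) = k - 3" using dA[OF wA] dw tw by simp
      have "{y,w} \<in> E" using w1 adj by auto
      hence c1: "card (N w - N y) + card (N y) \<le> k+4" using U1 dyk dw k10 by simp
      have uNy: "u \<notin> N y" using yR symN by blast
      have SS: "insert u (insert y ((N w \<inter> A) - N y)) \<subseteq> N w - N y"
        using uNw[OF wA] uNy symN w1 irrN by auto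
      have c4: "card ((N w \<inter> A) \<inter> N y) \<le> 2"
      proof -
        have "(N w \<inter> A) \<inter> N y \<subseteq> (N y \<inter> A) - {w}" using irrN by auto
        hence "card ((N w \<inter> A) \<inter> N y) \<le> card ((N y \<inter> A) - {w})" by (rule card_mono[rotated]) (use finN in auto)
        thus ?thesis using sy3 w1 finN by simp
      qed
      have c5: "card ((N w \<inter> A) - N y) = card (N w \<inter> A) - card ((N w \<inter> A) \<inter> N y)"
        by (rule card_Diff_subset_Int) (use finN in auto)
      have c6: "card (insert u (insert y ((N w \<inter> A) - N y))) = card ((N w \<inter> A) - N y) + 2"
        using yR uA finN by auto
      have "card (insert u (insert y ((N w \<inter> A) - N y))) \<le> card (N w - N y)"
        by (rule card_mono[OF _ SS]) (use finN in auto)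
      hence False using c1 c4 c5 c6 aw dyk k10 by simp
      thus ?thesis by simp
    qed
  qed
qed

end


context tf begin

lemma sumdeg: "(\<Sum>v\<in>V. card (N v)) \<le> 2*k*k+k+3 \<or> (\<Sum>v\<in>V. card (N v)) \<le> 2*k*k+24"
proof -
  have Vne: "V \<noteq> {}" using cardV by auto
  define m where "m = Max ((\<lambda>v. card (N v)) ` V)"
  have "m \<in> (\<lambda>v. card (N v)) ` V" unfolding m_def by (rule Max_in) (use finV Vne in auto)
  then obtain u where uV: "u \<in> V" and um: "card (N u) = m" by auto
  have umax: "\<forall>v\<in>V. card (N v) \<le> card (N u)" using um m_def finV by auto
  interpret tfu V E k u by unfold_locales (use uV umax in auto)
  consider "card A \<le> k" | "card A = k+1" | "card A = k+2" | "card A = k+3" | "k+4 \<le> card A" by linarith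
  thus ?thesis
  proof cases
    case 1 thus ?thesis using sum_le_k umax by fastforce
  next
    case 2 show ?thesis by (rule disjE[OF case0[OF 2]]) linarith+
  next
    case 3 thus ?thesis using case1 by simp
  next
    case 4 thus ?thesis using case2 by simp
  next
    case 5 thus ?thesis using star[OF uV umax] by simp
  qed
qed

end

lemma upper_bound:
  assumes sg: "simple_graph_on {0..<2*k+1} E" and nc: "\<not> contains_copy {0..<2*k+1} E (T3_vertices (k+5)) (T3_edges (k+5))"
    and k10: "10 \<le> k"
  shows "card E \<le> k*k - 1 + max ((k+5) div 2) 13"
proof -
  let ?V = "{0..<2*k+1}"
  have cond: "card (nbr ?V E x \<union> nbr ?V E w) \<le> k+4"
    if "{x,w} \<in> E" "k+1 \<le> card (nbr ?V E x)" "4 \<le> card (nbr ?V E w)" for x w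
  proof (rule ccontr)
    assume "\<not> ?thesis"
    hence "k+5 \<le> card (nbr ?V E x \<union> nbr ?V E w)" by simp
    hence "contains_copy ?V E (T3_vertices (k+5)) (T3_edges (k+5))"
      using copy_suf[OF sg _ that] by simp
    thus False using nc by simp
  qed
  interpret tf ?V E k by unfold_locales (use sg k10 cond in auto)
  have hs: "(\<Sum>v\<in>?V. card (nbr ?V E v)) = 2 * card E" by (rule handshake[OF sg]) simp
  have sd: "2 * card E \<le> 2*(k*k)+k+3 \<or> 2 * card E \<le> 2*(k*k)+24" using sumdeg hs by (simp add: algebra_simps)
  obtain j where "k = 2*j \<or> k = 2*j+1" by (metis odd_two_times_div_two_nat even_two_times_div_two Suc_eq_plus1 odd_two_times_div_two_succ)
  thus ?thesis
  proof
    assume kj: "k = 2*j"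
    have a: "(k+5) div 2 = j+2" using kj by simp
    have b: "k*k = 4*(j*j)" using kj by simp
    show ?thesis using sd a b kj k10 by auto
  next
    assume kj: "k = 2*j+1"
    have a: "(k+5) div 2 = j+3" using kj by simp
    have b: "k*k = 4*(j*j) + 4*j + 1" using kj by (simp add: algebra_simps)
    show ?thesis using sd a b kj k10 by auto
  qed
qed


definition mkE :: "nat \<Rightarrow> (nat \<Rightarrow> nat \<Rightarrow> bool) \<Rightarrow> nat set set" where
  "mkE p P = {{x,y} | x y. x < p \<and> y < p \<and> x \<noteq> y \<and> P x y}"

lemma mkE_sg: "simple_graph_on {0..<p} (mkE p P)"
  unfolding simple_graph_on_def mkE_def by auto

lemma mkE_nbr:
  assumes sym: "\<And>x y. P x y = P y x" and x: "x < p"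
  shows "nbr {0..<p} (mkE p P) x = {y. y < p \<and> y \<noteq> x \<and> P x y}"
proof -
  have "{x,y} \<in> mkE p P \<longleftrightarrow> y < p \<and> y \<noteq> x \<and> P x y" for y
  proof
    assume "{x,y} \<in> mkE p P"
    then obtain a b where ab: "{x,y} = {a,b}" "a < p" "b < p" "a \<noteq> b" "P a b" unfolding mkE_def by blast
    hence "(x = a \<and> y = b) \<or> (x = b \<and> y = a)" by (auto simp: doubleton_eq_iff)
    thus "y < p \<and> y \<noteq> x \<and> P x y" using ab sym by auto
  next
    assume "y < p \<and> y \<noteq> x \<and> P x y"
    thus "{x,y} \<in> mkE p P" unfolding mkE_def using x by blast
  qed
  thus ?thesis unfolding nbr_def by auto
qed

definition P1 :: "nat \<Rightarrow> nat \<Rightarrow> nat \<Rightarrow> bool" where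
  "P1 k x y = ((x < k+4 \<and> y < k+4) \<or> (k+4 \<le> x \<and> k+4 \<le> y))"

lemma constr1:
  assumes k10: "10 \<le> k"
  shows "simple_graph_on {0..<2*k+1} (mkE (2*k+1) (P1 k))"
    and "\<not> contains_copy {0..<2*k+1} (mkE (2*k+1) (P1 k)) (T3_vertices (k+5)) (T3_edges (k+5))"
    and "card (mkE (2*k+1) (P1 k)) = k*k + 12"
proof -
  let ?E = "mkE (2*k+1) (P1 k)"
  let ?V = "{0..<2*k+1}"
  show sg: "simple_graph_on ?V ?E" by (rule mkE_sg)
  have nb: "nbr ?V ?E x = {y. y < 2*k+1 \<and> y \<noteq> x \<and> P1 k x y}" if "x < 2*k+1" for x
    by (rule mkE_nbr) (use that in \<open>auto simp: P1_def\<close>)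
  have nX: "nbr ?V ?E x = {0..<k+4} - {x}" if "x < k+4" for x
  proof -
    have xl: "x < 2*k+1" using that k10 by linarith
    show ?thesis unfolding nb[OF xl] P1_def using that k10 by auto
  qed
  have nY: "nbr ?V ?E x = {k+4..<2*k+1} - {x}" if "k+4 \<le> x" "x < 2*k+1" for x
    unfolding nb[OF that(2)] P1_def using that by auto
  show "\<not> contains_copy ?V ?E (T3_vertices (k+5)) (T3_edges (k+5))"
  proof
    assume "contains_copy ?V ?E (T3_vertices (k+5)) (T3_edges (k+5))"
    then obtain x w where xw: "{x,w} \<in> ?E" "k+5 \<le> card (nbr ?V ?E x \<union> nbr ?V ?E w)"
      using copy_nec[OF sg] by blast
    have xV: "x < 2*k+1" and wV: "w < 2*k+1" using sg_edge[OF sg xw(1)] by auto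
    have "w \<in> nbr ?V ?E x" using nbr_iff[OF sg] xw by auto
    hence pw: "P1 k x w" unfolding nb[OF xV] by auto
    show False
    proof (cases "x < k+4")
      case True
      hence "w < k+4" using pw P1_def by auto
      hence "nbr ?V ?E x \<union> nbr ?V ?E w \<subseteq> {0..<k+4}" using nX True by auto
      hence "card (nbr ?V ?E x \<union> nbr ?V ?E w) \<le> k+4" using card_mono[of "{0..<k+4}"] by fastforce
      thus False using xw by simp
    next
      case False
      hence "k+4 \<le> w" using pw P1_def by auto
      hence "nbr ?V ?E x \<union> nbr ?V ?E w \<subseteq> {k+4..<2*k+1}" using nY False xV wV by auto
      hence "card (nbr ?V ?E x \<union> nbr ?V ?E w) \<le> k-3" using card_mono[of "{k+4..<2*k+1}"] by fastforce
      thus False using xw by simp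
    qed
  qed
  have hs: "(\<Sum>v\<in>?V. card (nbr ?V ?E v)) = 2 * card ?E" by (rule handshake[OF sg]) simp
  have "?V = {0..<k+4} \<union> {k+4..<2*k+1}" using k10 by auto
  hence "(\<Sum>v\<in>?V. card (nbr ?V ?E v)) = (\<Sum>v\<in>{0..<k+4}. card (nbr ?V ?E v)) + (\<Sum>v\<in>{k+4..<2*k+1}. card (nbr ?V ?E v))"
    by (simp add: sum.union_disjoint)
  also have "(\<Sum>v\<in>{0..<k+4}. card (nbr ?V ?E v)) = (\<Sum>v\<in>{0..<k+4}. k+3)"
    using nX by (intro sum.cong) auto
  also have "(\<Sum>v\<in>{k+4..<2*k+1}. card (nbr ?V ?E v)) = (\<Sum>v\<in>{k+4..<2*k+1}. k-4)"
    using nY k10 by (intro sum.cong) auto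
  finally have "2 * card ?E = (k+4)*(k+3) + (k-3)*(k-4)" using hs by simp
  moreover have "(k+4)*(k+3) + (k-3)*(k-4) = 2*(k*k+12)"
  proof -
    define j where "j = k - 4"
    have "k = j + 4" using k10 j_def by simp
    thus ?thesis by (simp add: algebra_simps)
  qed
  ultimately show "card ?E = k*k+12" by simp
qed


definition comp2 :: "nat \<Rightarrow> nat \<Rightarrow> nat \<Rightarrow> bool" where
  "comp2 k i i' = (i' = i+1 \<or> i = i'+1 \<or> i' = i + k div 2 \<or> i = i' + k div 2
      \<or> (odd k \<and> ((i = 0 \<and> i' = 2*(k div 2) - 1) \<or> (i' = 0 \<and> i = 2*(k div 2) - 1))))"

definition bip2 :: "nat \<Rightarrow> nat \<Rightarrow> nat \<Rightarrow> bool" where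
  "bip2 k i j = (j < k - 1 \<and> i < 2*(k div 2) \<and> (i = j \<or> i = j+1 \<or> (odd k \<and> j = k - 2 \<and> i = 0)))"

lemma comp2_sym: "comp2 k i i' = comp2 k i' i" unfolding comp2_def by auto

lemma cset_even:
  assumes k: "k = 2*h" and h5: "5 \<le> h" and x: "x < k"
  shows "card {i'. i' < 2*(k div 2) \<and> comp2 k x i'} = card {j. bip2 k x j} + 1 \<and> card {j. bip2 k x j} \<le> 2"
proof -
  have kd: "k div 2 = h" using k by simp
  have ne: "\<not> odd k" using k by simp
  consider "x = 0" | "x = k - 1" | "0 < x \<and> x < k - 1 \<and> x < h" | "0 < x \<and> x < k - 1 \<and> h \<le> x" using x by linarith
  thus ?thesis
  proof cases
    case 1
    have a: "{i'. i' < 2*(k div 2) \<and> comp2 k x i'} = {1, h}" using 1 k h5 by (auto simp: comp2_def kd)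
    have b: "{j. bip2 k x j} = {0}" using 1 k h5 by (auto simp: bip2_def kd)
    show ?thesis unfolding a b using h5 by simp
  next
    case 2
    have a: "{i'. i' < 2*(k div 2) \<and> comp2 k x i'} = {k-2, h-1}" using 2 k h5 by (auto simp: comp2_def kd)
    have b: "{j. bip2 k x j} = {k-2}" using 2 k h5 by (auto simp: bip2_def kd)
    show ?thesis unfolding a b using h5 k by simp
  next
    case 3
    have a: "{i'. i' < 2*(k div 2) \<and> comp2 k x i'} = {x-1, x+1, x+h}" using 3 k h5 by (auto simp: comp2_def kd)
    have b: "{j. bip2 k x j} = {x, x-1}" using 3 k h5 by (auto simp: bip2_def kd)
    have d: "x-1 \<noteq> x+1" "x-1 \<noteq> x+h" "x+1 \<noteq> x+h" "x \<noteq> x-1" using 3 h5 by auto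
    show ?thesis unfolding a b using d by simp
  next
    case 4
    have a: "{i'. i' < 2*(k div 2) \<and> comp2 k x i'} = {x-1, x+1, x-h}" using 4 k h5 by (auto simp: comp2_def kd)
    have b: "{j. bip2 k x j} = {x, x-1}" using 4 k h5 by (auto simp: bip2_def kd)
    have d: "x-1 \<noteq> x+1" "x-1 \<noteq> x-h" "x+1 \<noteq> x-h" "x \<noteq> x-1" using 4 h5 by auto
    show ?thesis unfolding a b using d by simp
  qed
qed

lemma cset_odd:
  assumes k: "k = 2*h+1" and h5: "5 \<le> h" and x: "x < k - 1"
  shows "card {i'. i' < 2*(k div 2) \<and> comp2 k x i'} = card {j. bip2 k x j} + 1 \<and> card {j. bip2 k x j} \<le> 2"
proof -
  have kd: "k div 2 = h" using k by simp
  have od: "odd k" using k by simp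
  consider "x = 0" | "x = k - 2" | "0 < x \<and> x < k - 2 \<and> x < h" | "0 < x \<and> x < k - 2 \<and> h \<le> x" using x by linarith
  thus ?thesis
  proof cases
    case 1
    have a: "{i'. i' < 2*(k div 2) \<and> comp2 k x i'} = {1, h, 2*h-1}" using 1 k h5 by (auto simp: comp2_def kd)
    have b: "{j. bip2 k x j} = {0, 2*h-1}" using 1 k h5 by (auto simp: bip2_def kd)
    show ?thesis unfolding a b using h5 by simp
  next
    case 2
    have a: "{i'. i' < 2*(k div 2) \<and> comp2 k x i'} = {2*h-2, h-1, 0}" using 2 k h5 by (auto simp: comp2_def kd)
    have b: "{j. bip2 k x j} = {2*h-1, 2*h-2}" using 2 k h5 by (auto simp: bip2_def kd)
    show ?thesis unfolding a b using h5 k by simp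
  next
    case 3
    have a: "{i'. i' < 2*(k div 2) \<and> comp2 k x i'} = {x-1, x+1, x+h}" using 3 k h5 by (auto simp: comp2_def kd)
    have b: "{j. bip2 k x j} = {x, x-1}" using 3 k h5 by (auto simp: bip2_def kd)
    have d: "x-1 \<noteq> x+1" "x-1 \<noteq> x+h" "x+1 \<noteq> x+h" "x \<noteq> x-1" using 3 h5 by auto
    show ?thesis unfolding a b using d by simp
  next
    case 4
    have a: "{i'. i' < 2*(k div 2) \<and> comp2 k x i'} = {x-1, x+1, x-h}" using 4 k h5 by (auto simp: comp2_def kd)
    have b: "{j. bip2 k x j} = {x, x-1}" using 4 k h5 by (auto simp: bip2_def kd)
    have d: "x-1 \<noteq> x+1" "x-1 \<noteq> x-h" "x+1 \<noteq> x-h" "x \<noteq> x-1" using 4 h5 by auto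
    show ?thesis unfolding a b using d by simp
  qed
qed

lemma rset:
  assumes k10: "10 \<le> k" and j: "j < k - 1"
  shows "card {i. bip2 k i j} = 2"
proof (cases "even k")
  case True
  then obtain h where k: "k = 2*h" by blast
  have kd: "k div 2 = h" using k by simp
  have "{i. bip2 k i j} = {j, j+1}" using k j k10 by (auto simp: bip2_def kd)
  thus ?thesis by simp
next
  case False
  then obtain h where k: "k = 2*h+1" using oddE by blast
  have kd: "k div 2 = h" using k by simp
  show ?thesis
  proof (cases "j = k - 2")
    case True
    have "{i. bip2 k i j} = {j, 0}" using k j k10 True by (auto simp: bip2_def kd)
    thus ?thesis using True k10 by simp
  next
    case False
    have "{i. bip2 k i j} = {j, j+1}" using k j k10 False by (auto simp: bip2_def kd)
    thus ?thesis by simp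
  qed
qed


definition P2 :: "nat \<Rightarrow> nat \<Rightarrow> nat \<Rightarrow> bool" where
  "P2 k x y = ((x < k+2 \<and> y < k+2 \<and> \<not>(x < 2*(k div 2) \<and> y < 2*(k div 2) \<and> comp2 k x y))
     \<or> (k+2 \<le> x \<and> k+2 \<le> y)
     \<or> (k+2 \<le> y \<and> bip2 k x (y - (k+2)))
     \<or> (k+2 \<le> x \<and> bip2 k y (x - (k+2))))"

lemma cset_all:
  assumes k10: "10 \<le> k" and x: "x < 2*(k div 2)"
  shows "card {i'. i' < 2*(k div 2) \<and> comp2 k x i'} = card {j. bip2 k x j} + 1 \<and> card {j. bip2 k x j} \<le> 2"
proof (cases "even k")
  case True
  then obtain h where k: "k = 2*h" by blast
  show ?thesis by (rule cset_even[OF k]) (use k k10 x in auto)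
next
  case False
  then obtain h where k: "k = 2*h+1" using oddE by blast
  show ?thesis by (rule cset_odd[OF k]) (use k k10 x in auto)
qed

lemma constr2:
  assumes k10: "10 \<le> k"
  shows "simple_graph_on {0..<2*k+1} (mkE (2*k+1) (P2 k))"
    and "\<not> contains_copy {0..<2*k+1} (mkE (2*k+1) (P2 k)) (T3_vertices (k+5)) (T3_edges (k+5))"
    and "card (mkE (2*k+1) (P2 k)) = k*k - 1 + (k+5) div 2"
proof -
  let ?E = "mkE (2*k+1) (P2 k)"
  let ?V = "{0..<2*k+1}"
  define c where "c = 2*(k div 2)"
  have cb: "k - 1 \<le> c" "c \<le> k" using c_def by auto
  define Cs where "Cs x = {i'. i' < c \<and> comp2 k x i'}" for x
  define Bs where "Bs x = {j. bip2 k x j}" for x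
  define Rp where "Rp x = {y. k+2 \<le> y \<and> bip2 k x (y - (k+2))}" for x
  show sg: "simple_graph_on ?V ?E" by (rule mkE_sg)
  have nb: "nbr ?V ?E x = {y. y < 2*k+1 \<and> y \<noteq> x \<and> P2 k x y}" if "x < 2*k+1" for x
    by (rule mkE_nbr) (use that in \<open>auto simp: P2_def comp2_sym\<close>)
  have RpB: "Rp x = (\<lambda>j. j + (k+2)) ` Bs x" for x
  proof
    show "Rp x \<subseteq> (\<lambda>j. j + (k+2)) ` Bs x"
    proof
      fix y assume "y \<in> Rp x"
      hence "k+2 \<le> y" "bip2 k x (y - (k+2))" using Rp_def by auto
      thus "y \<in> (\<lambda>j. j + (k+2)) ` Bs x" unfolding Bs_def by (intro image_eqI[of _ _ "y - (k+2)"]) auto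
    qed
    show "(\<lambda>j. j + (k+2)) ` Bs x \<subseteq> Rp x" using Rp_def Bs_def by auto
  qed
  have cRp: "card (Rp x) = card (Bs x)" for x unfolding RpB by (rule card_image) (simp add: inj_on_def)
  have Rprange: "Rp x \<subseteq> {k+2..<2*k+1}" for x using Rp_def by (auto simp: bip2_def)
  have N1: "nbr ?V ?E x = ({0..<k+2} - {x} - Cs x) \<union> Rp x" if x: "x < c" for x
  proof -
    have xl: "x < 2*k+1" using x cb by linarith
    show ?thesis unfolding nb[OF xl] Cs_def Rp_def P2_def c_def[symmetric]
      using x cb by (auto simp: bip2_def c_def)
  qed
  have N2: "nbr ?V ?E x = {0..<k+2} - {x}" if x: "c \<le> x" "x < k+2" for x
  proof -
    have xl: "x < 2*k+1" using x k10 by linarith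
    show ?thesis unfolding nb[OF xl] P2_def c_def[symmetric]
      using x cb k10 by (auto simp: bip2_def c_def)
  qed
  have N3: "nbr ?V ?E x = ({k+2..<2*k+1} - {x}) \<union> {i. bip2 k i (x - (k+2))}" if x: "k+2 \<le> x" "x < 2*k+1" for x
    unfolding nb[OF x(2)] P2_def c_def[symmetric]
    using x cb k10 by (auto simp: bip2_def c_def)
  have xCs: "x \<notin> Cs x" for x using cb k10 by (auto simp: Cs_def comp2_def c_def)
  have d1: "card (nbr ?V ?E x) = k" if x: "x < c" for x
  proof -
    have cc: "card (Cs x) = card (Bs x) + 1" using cset_all[OF k10] x unfolding Cs_def Bs_def c_def by blast
    have CsS: "Cs x \<subseteq> {0..<k+2} - {x}" using xCs cb by (auto simp: Cs_def)
    have fC: "finite (Cs x)" using CsS finite_subset by blast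
    have u1: "card ({0..<k+2} - {x} - Cs x) + card (Cs x) = card ({0..<k+2} - {x})"
    proof -
      have "({0..<k+2} - {x} - Cs x) \<union> Cs x = {0..<k+2} - {x}" using CsS by auto
      moreover have "card (({0..<k+2} - {x} - Cs x) \<union> Cs x) = card ({0..<k+2} - {x} - Cs x) + card (Cs x)"
        by (rule card_Un_disjoint) (use fC in auto)
      ultimately show ?thesis by simp
    qed
    have u2: "card ({0..<k+2} - {x}) = k+1" using x cb by simp
    have u3: "card (({0..<k+2} - {x} - Cs x) \<union> Rp x) = card ({0..<k+2} - {x} - Cs x) + card (Rp x)"
    proof (rule card_Un_disjoint)
      show "finite (Rp x)" using Rprange finite_subset by blast
      show "({0..<k+2} - {x} - Cs x) \<inter> Rp x = {}" using Rprange by fastforce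
    qed simp
    have v1: "card ({0..<k+2} - {x} - Cs x) + card (Bs x) = k" using u1 u2 cc by simp
    have "card (({0..<k+2} - {x} - Cs x) \<union> Rp x) = k" using u3 cRp v1 by simp
    thus ?thesis using N1[OF x] by simp
  qed
  have d2: "card (nbr ?V ?E x) = k+1" if x: "c \<le> x" "x < k+2" for x
    using N2[OF x] x by simp
  have d3: "card (nbr ?V ?E x) = k" if x: "k+2 \<le> x" "x < 2*k+1" for x
  proof -
    have j: "x - (k+2) < k - 1" using x by simp
    have "card (({k+2..<2*k+1} - {x}) \<union> {i. bip2 k i (x - (k+2))}) = card ({k+2..<2*k+1} - {x}) + card {i. bip2 k i (x - (k+2))}"
    proof (rule card_Un_disjoint)
      show "finite {i. bip2 k i (x - (k + 2))}" by (rule finite_subset[of _ "{0..<k}"]) (auto simp: bip2_def)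
      show "({k+2..<2*k+1} - {x}) \<inter> {i. bip2 k i (x - (k+2))} = {}" by (auto simp: bip2_def)
    qed simp
    moreover have "card ({k+2..<2*k+1} - {x}) = k - 2" using x by simp
    ultimately show ?thesis using N3[OF x] rset[OF k10 j] k10 by simp
  qed
  show "\<not> contains_copy ?V ?E (T3_vertices (k+5)) (T3_edges (k+5))"
  proof
    assume "contains_copy ?V ?E (T3_vertices (k+5)) (T3_edges (k+5))"
    then obtain x w where xw: "{x,w} \<in> ?E" "k+1 \<le> card (nbr ?V ?E x)" "k+5 \<le> card (nbr ?V ?E x \<union> nbr ?V ?E w)"
      using copy_nec[OF sg] by blast
    have xV: "x < 2*k+1" and wV: "w < 2*k+1" using sg_edge[OF sg xw(1)] by auto
    have xr: "c \<le> x \<and> x < k+2"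
    proof (rule ccontr)
      assume "\<not> ?thesis"
      hence "x < c \<or> k+2 \<le> x" by auto
      thus False using d1 d3 xV xw(2) by fastforce
    qed
    have Nx: "nbr ?V ?E x = {0..<k+2} - {x}" using N2 xr by auto
    have "w \<in> nbr ?V ?E x" using nbr_iff[OF sg] xw by auto
    hence wr: "w < k+2" using Nx by auto
    have "nbr ?V ?E x \<union> nbr ?V ?E w \<subseteq> {0..<k+2} \<union> Rp w"
    proof (cases "w < c")
      case True thus ?thesis using Nx N1[OF True] by auto
    next
      case False thus ?thesis using Nx N2[of w] wr by auto
    qed
    moreover have "finite (Rp w)" using Rprange finite_subset by blast
    ultimately have "card (nbr ?V ?E x \<union> nbr ?V ?E w) \<le> card ({0..<k+2} \<union> Rp w)"
      by (intro card_mono) auto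
    also have "\<dots> \<le> card {0..<k+2} + card (Rp w)" by (rule card_Un_le)
    also have "card (Rp w) \<le> 2"
    proof (cases "w < c")
      case True thus ?thesis using cset_all[OF k10, of w] cRp c_def Bs_def by simp
    next
      case False
      hence "Rp w = {}" using Rp_def by (auto simp: bip2_def c_def)
      thus ?thesis by simp
    qed
    finally show False using xw by simp
  qed
  have hs: "(\<Sum>v\<in>?V. card (nbr ?V ?E v)) = 2 * card ?E" by (rule handshake[OF sg]) simp
  define g where "g v = card (nbr ?V ?E v)" for v
  have hs': "sum g ?V = 2 * card ?E" using hs g_def by simp
  have e: "?V = {0..<c} \<union> {c..<k+2} \<union> {k+2..<2*k+1}" using cb k10 by auto
  have "sum g ?V = sum g ({0..<c} \<union> {c..<k+2} \<union> {k+2..<2*k+1})" by (rule arg_cong[OF e])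
  also have "\<dots> = sum g ({0..<c} \<union> {c..<k+2}) + sum g {k+2..<2*k+1}"
    by (rule sum.union_disjoint) (use cb in auto)
  also have "sum g ({0..<c} \<union> {c..<k+2}) = sum g {0..<c} + sum g {c..<k+2}"
    by (rule sum.union_disjoint) auto
  also have "sum g {0..<c} = (\<Sum>v\<in>{0..<c}. k)"
    using d1 g_def by (intro sum.cong) auto
  also have "sum g {c..<k+2} = (\<Sum>v\<in>{c..<k+2}. k+1)"
    using d2 g_def by (intro sum.cong) auto
  also have "sum g {k+2..<2*k+1} = (\<Sum>v\<in>{k+2..<2*k+1}. k)"
    using d3 g_def by (intro sum.cong) auto
  finally have tot: "2 * card ?E = c*k + (k+2-c)*(k+1) + (k-1)*k" using hs' by simp
  show "card ?E = k*k - 1 + (k+5) div 2"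
  proof (cases "even k")
    case True
    then obtain h where k: "k = 2*h" by blast
    have "c = k" using c_def k by simp
    hence "2 * card ?E = 2*(k*k) + k + 2" using tot k10 by (simp add: algebra_simps)
    moreover have "(k+5) div 2 = h+2" using k by simp
    moreover have "k*k = 4*(h*h)" using k by simp
    ultimately show ?thesis using k k10 by simp
  next
    case False
    then obtain h where k: "k = 2*h+1" using oddE by blast
    have "c = k - 1" using c_def k by simp
    hence "2 * card ?E = 2*(k*k) + k + 3" using tot k10 k by (simp add: algebra_simps)
    moreover have "(k+5) div 2 = h+3" using k by simp
    moreover have "k*k = 4*(h*h) + 4*h + 1" using k by (simp add: algebra_simps)
    ultimately show ?thesis using k k10 by simp
  qed
qed


theorem lemma4p6:
  fixes n :: nat
  assumes "n \<ge> 15"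
  shows "int (ex (2 * n - 9) (T3_vertices n) (T3_edges n))
           = int n ^ 2 - 10 * int n + 24 + max (int n div 2) 13"
proof -
  define k where "k = n - 5"
  have nk: "n = k + 5" and k10: "10 \<le> k" using assms k_def by auto
  have p: "2 * n - 9 = 2*k+1" using nk by simp
  define F where "F = k*k - 1 + max ((k+5) div 2) 13"
  define S where "S = {card E | E. simple_graph_on {0..<2*k+1} E \<and>
                    \<not> contains_copy {0..<2*k+1} E (T3_vertices n) (T3_edges n)}"
  have exS: "ex (2 * n - 9) (T3_vertices n) (T3_edges n) = Max S" unfolding ex_def S_def p ..
  have ub: "s \<le> F" if s: "s \<in> S" for s
  proof -
    obtain E where E: "s = card E" "simple_graph_on {0..<2*k+1} E"
      "\<not> contains_copy {0..<2*k+1} E (T3_vertices (k+5)) (T3_edges (k+5))"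
      using s unfolding S_def nk by blast
    show ?thesis using upper_bound[OF E(2) E(3) k10] E(1) unfolding F_def by simp
  qed
  have FS: "F \<in> S"
  proof (cases "(k+5) div 2 \<le> 13")
    case True
    hence "F = k*k + 12" using F_def k10 by simp
    hence "F = card (mkE (2*k+1) (P1 k)) \<and> simple_graph_on {0..<2*k+1} (mkE (2*k+1) (P1 k)) \<and>
       \<not> contains_copy {0..<2*k+1} (mkE (2*k+1) (P1 k)) (T3_vertices (k+5)) (T3_edges (k+5))"
      using constr1[OF k10] by simp
    thus ?thesis unfolding S_def nk by blast
  next
    case False
    hence "F = k*k - 1 + (k+5) div 2" using F_def by simp
    hence "F = card (mkE (2*k+1) (P2 k)) \<and> simple_graph_on {0..<2*k+1} (mkE (2*k+1) (P2 k)) \<and>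
       \<not> contains_copy {0..<2*k+1} (mkE (2*k+1) (P2 k)) (T3_vertices (k+5)) (T3_edges (k+5))"
      using constr2[OF k10] by simp
    thus ?thesis unfolding S_def nk by blast
  qed
  have "S \<subseteq> {0..F}" using ub by auto
  hence finS: "finite S" using finite_subset by blast
  have "Max S = F" by (rule Max_eqI[OF finS ub FS])
  hence "ex (2 * n - 9) (T3_vertices n) (T3_edges n) = F" using exS by simp
  moreover have "int F = int n ^ 2 - 10 * int n + 24 + max (int n div 2) 13"
  proof -
    have a: "int n div 2 = int ((k+5) div 2)" using nk by (simp add: zdiv_int)
    have b: "int (k*k - 1) = int k * int k - 1" using k10 by (simp add: of_nat_diff)
    have "int F = int (k*k - 1) + max (int ((k+5) div 2)) 13" unfolding F_def by (simp add: of_nat_max)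
    thus ?thesis unfolding a b nk by (simp add: algebra_simps power2_eq_square)
  qed
  ultimately show ?thesis by simp
qed


end
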